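(* Let $X$ be a closed oriented 3-manifold which is an integral homology 3-sphere. If $\varrho:\pi_1(X)\to SU(3)$ is an irreducible representation, then there exists $\gamma\in\pi_1(X)$ such that $\varrho(\gamma)$ has three distinct eigenvalues.
   Context: Irreducible means that the centralizer of $\varrho(\pi_1(X))$ in $SU(3)$ is the center $Z(SU(3))$ (equivalently, $\mathbb{C}^3$ has no proper nonzero $\varrho$-invariant subspace). *)

theory Defs
  imports "HOL-Analysis.Analysis" "HOL-Homology.Homology"
begin

definition topological_manifold :: "nat \<Rightarrow> 'a topology \<Rightarrow> bool" where
  "topological_manifold n X \<longleftrightarrow> Hausdorff_space X \<and> second_countable X \<and>
     (\<forall>x\<in>topspace X. \<exists>U. openin X U \<and> x \<in> U \<and>
         subtopology X U homeomorphic_space Euclidean_space n)"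

definition closed_3_manifold :: "'a topology \<Rightarrow> bool" where
  "closed_3_manifold X \<longleftrightarrow> topological_manifold 3 X \<and> compact_space X"

definition integral_homology_3_sphere :: "'a topology \<Rightarrow> bool" where
  "integral_homology_3_sphere X \<longleftrightarrow>
     (\<forall>p. homology_group p X \<cong> homology_group p (nsphere 3))"

definition closed_orientable :: "nat \<Rightarrow> 'a topology \<Rightarrow> bool" where
  "closed_orientable n X \<longleftrightarrow> homology_group (int n) X \<cong> integer_group"

definition loopin :: "'a topology \<Rightarrow> 'a \<Rightarrow> (real \<Rightarrow> 'a) \<Rightarrow> bool" where
  "loopin X x0 g \<longleftrightarrow> pathin X g \<and> g 0 = x0 \<and> g 1 = x0"

definition loop_join :: "(real \<Rightarrow> 'a) \<Rightarrow> (real \<Rightarrow> 'a) \<Rightarrow> real \<Rightarrow> 'a" where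
  "loop_join g h = (\<lambda>t. if t \<le> 1/2 then g (2 * t) else h (2 * t - 1))"

definition loop_homotopic :: "'a topology \<Rightarrow> 'a \<Rightarrow> (real \<Rightarrow> 'a) \<Rightarrow> (real \<Rightarrow> 'a) \<Rightarrow> bool" where
  "loop_homotopic X x0 g h \<longleftrightarrow>
     homotopic_with (\<lambda>k. k 0 = x0 \<and> k 1 = x0) (top_of_set {0..1}) X g h"

definition conj_transpose :: "complex^3^3 \<Rightarrow> complex^3^3" where
  "conj_transpose A = (\<chi> i j. cnj (A $ j $ i))"

definition SU3 :: "(complex^3^3) set" where
  "SU3 = {A. A ** conj_transpose A = mat 1 \<and> det A = 1}"

text \<open>A representation of pi_1(X, x0) into SU(3), described as a function on based loops
  that is constant on homotopy classes (rel endpoints) and turns concatenation into the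
  matrix product; such functions are exactly the homomorphisms pi_1(X,x0) -> SU(3).\<close>
definition pi1_rep_SU3 :: "'a topology \<Rightarrow> 'a \<Rightarrow> ((real \<Rightarrow> 'a) \<Rightarrow> complex^3^3) \<Rightarrow> bool" where
  "pi1_rep_SU3 X x0 \<rho> \<longleftrightarrow>
     (\<forall>g. loopin X x0 g \<longrightarrow> \<rho> g \<in> SU3) \<and>
     (\<forall>g h. loopin X x0 g \<and> loopin X x0 h \<and> loop_homotopic X x0 g h \<longrightarrow> \<rho> g = \<rho> h) \<and>
     (\<forall>g h. loopin X x0 g \<and> loopin X x0 h \<longrightarrow> \<rho> (loop_join g h) = \<rho> g ** \<rho> h)"

definition complex_subspace :: "(complex^3) set \<Rightarrow> bool" where
  "complex_subspace W \<longleftrightarrow> 0 \<in> W \<and> (\<forall>v\<in>W. \<forall>w\<in>W. v + w \<in> W) \<and>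
     (\<forall>c. \<forall>v\<in>W. c *s v \<in> W)"

definition irreducible_rep :: "'a topology \<Rightarrow> 'a \<Rightarrow> ((real \<Rightarrow> 'a) \<Rightarrow> complex^3^3) \<Rightarrow> bool" where
  "irreducible_rep X x0 \<rho> \<longleftrightarrow>
     \<not> (\<exists>W. complex_subspace W \<and> W \<noteq> {0} \<and> W \<noteq> UNIV \<and>
            (\<forall>g. loopin X x0 g \<longrightarrow> (\<forall>v\<in>W. \<rho> g *v v \<in> W)))"

definition eigenvalues3 :: "complex^3^3 \<Rightarrow> complex set" where
  "eigenvalues3 A = {c. \<exists>v. v \<noteq> 0 \<and> A *v v = c *s v}"

end

theory Submission
  imports Defs "HOL-Computational_Algebra.Fundamental_Theorem_Algebra"
begin


definition trc :: "complex^3^3 \<Rightarrow> complex" where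
  "trc A = A$1$1 + A$2$2 + A$3$3"
definition s2 :: "complex^3^3 \<Rightarrow> complex" where
  "s2 A = A$1$1*A$2$2 - A$1$2*A$2$1 + A$1$1*A$3$3 - A$1$3*A$3$1 + A$2$2*A$3$3 - A$2$3*A$3$2"

lemma det_ker: "det (M::complex^3^3) = 0 \<longleftrightarrow> (\<exists>x. x \<noteq> 0 \<and> M *v x = 0)"
  by (metis invertible_det_nz invertible_left_inverse matrix_left_invertible_ker)

lemmas msimps = matrix_matrix_mult_def matrix_vector_mult_def mat_def sum_3 vec_eq_iff forall_3
   conj_transpose_def

lemma mat_diff_mv: "((A::complex^3^3) - mat c) *v x = A *v x - c *s x"
  by (simp add: msimps algebra_simps)

lemma eig_iff: "c \<in> eigenvalues3 A \<longleftrightarrow> det (A - mat c) = 0"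
  unfolding eigenvalues3_def det_ker mat_diff_mv by auto

lemma det_char: "det ((A::complex^3^3) - mat c) = det A - s2 A * c + trc A * c^2 - c^3"
  by (simp add: det_3 mat_def trc_def s2_def power2_eq_square power3_eq_cube algebra_simps)

lemma char_roots:
  fixes A :: "complex^3^3"
  obtains r0 r1 r2 where "\<And>c. det (A - mat c) = - ((c - r0)*(c - r1)*(c - r2))"
    "trc A = r0 + r1 + r2" "s2 A = r0*r1 + r0*r2 + r1*r2" "det A = r0*r1*r2"
proof -
  define p where "p = [:det A, - s2 A, trc A, -1:]"
  have dp: "degree p = 3" "lead_coeff p = -1" by (simp_all add: p_def)
  obtain root where r: "Polynomial.smult (lead_coeff p) (\<Prod>i<degree p. [:-root i, 1:]) = p"
    using complex_poly_decompose' by blast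
  have r': "Polynomial.smult (-1) (\<Prod>i<3. [:-root i, 1:]) = p" using r[unfolded dp(1)] dp(2) by (simp add: dp(1))
  have "(\<Prod>i<3. [:-root i, 1:]) = [:-root 0, 1:] * [:-root 1, 1:] * [:-root 2, 1:]"
    by (simp add: eval_nat_numeral mult.commute mult.left_commute)
  hence "p = Polynomial.smult (-1) ([:-root 0, 1:] * [:-root 1, 1:] * [:-root 2, 1:])"
    using r' by simp
  hence e: "[:det A, - s2 A, trc A, -1:] = [: root 0 * root 1 * root 2, -(root 0 * root 1 + root 0 * root 2 + root 1 * root 2), root 0 + root 1 + root 2, -1:]"
    unfolding p_def by (simp add: algebra_simps)
  have e1: "det A = root 0 * root 1 * root 2" "s2 A = root 0 * root 1 + root 0 * root 2 + root 1 * root 2"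
     "trc A = root 0 + root 1 + root 2"
    using e by (simp_all add: algebra_simps)
  show ?thesis
  proof (rule that[of "root 0" "root 1" "root 2"])
    fix c
    show "det (A - mat c) = - ((c - root 0)*(c - root 1)*(c - root 2))"
      unfolding det_char e1 by (simp add: power2_eq_square power3_eq_cube algebra_simps)
  qed (use e1 in auto)
qed


lemma matc_mult: "((mat c :: complex^3^3) ** B)$i$j = c * B$i$j"
  unfolding matrix_matrix_mult_def mat_def
  by (auto simp: if_distrib if_distribR sum.delta'[OF finite] cong: if_cong)
lemma m3: "((A::complex^3^3) ** B)$i$j = A$i$1 * B$1$j + A$i$2 * B$2$j + A$i$3 * B$3$j"
  by (simp add: matrix_matrix_mult_def sum_3)
lemma mat_comp: "(mat c :: complex^3^3)$i$j = (if i = j then c else 0)"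
  by (simp add: mat_def)
lemma neq3: "(1::3) \<noteq> 2" "(1::3) \<noteq> 3" "(2::3) \<noteq> 3" "(2::3) \<noteq> 1" "(3::3) \<noteq> 1" "(3::3) \<noteq> 2"
  by simp_all

definition cinner :: "complex^3 \<Rightarrow> complex^3 \<Rightarrow> complex" where
  "cinner x y = cnj (x$1) * y$1 + cnj (x$2) * y$2 + cnj (x$3) * y$3"
definition outer :: "complex^3 \<Rightarrow> complex^3^3" where
  "outer u = (\<chi> i j. u$i * cnj (u$j))"

lemma ct_comp: "conj_transpose A $ i $ j = cnj (A$j$i)"
  by (simp add: conj_transpose_def)
lemma outer_comp: "outer u $ i $ j = u$i * cnj (u$j)"
  by (simp add: outer_def)
lemma mv3: "((A::complex^3^3) *v x)$i = A$i$1 * x$1 + A$i$2 * x$2 + A$i$3 * x$3"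
  by (simp add: matrix_vector_mult_def sum_3)

lemmas cs = vector_add_component vector_minus_component vector_uminus_component matc_mult zero_index
  m3 mat_comp neq3 if_True if_False ct_comp outer_comp mv3 vector_smult_component cinner_def trc_def

lemma CH_pure:
  fixes A :: "complex^3^3"
  shows "A**A**A - mat (trc A) ** (A**A) + mat (s2 A) ** A - mat (det A) = 0"
  unfolding s2_def det_3 vec_eq_iff forall_3
  by (simp only: cs, simp add: algebra_simps)

lemma prod3:
  fixes A :: "complex^3^3"
  shows "(A - mat x) ** (A - mat y) ** (A - mat z) = A**A**A - mat (x+y+z) ** (A**A) + mat (x*y+x*z+y*z) ** A - mat (x*y*z)"
  unfolding vec_eq_iff forall_3
  by (simp only: cs, simp add: algebra_simps)

lemma CH:
  fixes A :: "complex^3^3"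
  assumes "trc A = x+y+z" "s2 A = x*y+x*z+y*z" "det A = x*y*z"
  shows "(A - mat x) ** (A - mat y) ** (A - mat z) = 0"
  using CH_pure[of A] unfolding prod3 assms .

lemma ct_mult: "conj_transpose ((A::complex^3^3) ** B) = conj_transpose B ** conj_transpose A"
  unfolding vec_eq_iff forall_3 by (simp only: cs, simp add: algebra_simps)
lemma ct_diff: "conj_transpose ((A::complex^3^3) - B) = conj_transpose A - conj_transpose B"
  unfolding vec_eq_iff forall_3 by (simp only: cs, simp add: algebra_simps)
lemma ct_add: "conj_transpose ((A::complex^3^3) + B) = conj_transpose A + conj_transpose B"
  unfolding vec_eq_iff forall_3 by (simp only: cs, simp add: algebra_simps)
lemma ct_mat: "conj_transpose (mat c :: complex^3^3) = mat (cnj c)"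
  unfolding vec_eq_iff forall_3 by (simp only: cs, simp add: algebra_simps)
lemma ct_ct: "conj_transpose (conj_transpose (A::complex^3^3)) = A"
  unfolding vec_eq_iff forall_3 by (simp only: cs, simp add: algebra_simps)
lemma ct_outer: "conj_transpose (outer u) = outer u"
  unfolding vec_eq_iff forall_3 by (simp only: cs, simp add: algebra_simps)
lemma ct_zero: "conj_transpose (0::complex^3^3) = 0"
  unfolding vec_eq_iff forall_3 by (simp only: cs, simp add: algebra_simps)
lemma mm_diff_r: "((A::complex^3^3) - B) ** C = A ** C - B ** C"
  unfolding vec_eq_iff forall_3 by (simp only: cs, simp add: algebra_simps)
lemma mm_diff_l: "(A::complex^3^3) ** (B - C) = A ** B - A ** C"
  unfolding vec_eq_iff forall_3 by (simp only: cs, simp add: algebra_simps)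
lemma mm_add_r: "((A::complex^3^3) + B) ** C = A ** C + B ** C"
  unfolding vec_eq_iff forall_3 by (simp only: cs, simp add: algebra_simps)
lemma mm_add_l: "(A::complex^3^3) ** (B + C) = A ** B + A ** C"
  unfolding vec_eq_iff forall_3 by (simp only: cs, simp add: algebra_simps)
lemma mat_mat: "(mat a :: complex^3^3) ** mat b = mat (a * b)"
  unfolding vec_eq_iff forall_3 by (simp only: cs, simp add: algebra_simps)
lemma mat_comm: "(A::complex^3^3) ** mat a = mat a ** A"
  unfolding vec_eq_iff forall_3 by (simp only: cs, simp add: algebra_simps)
lemma mat_assoc: "(mat a :: complex^3^3) ** (mat b ** A) = mat (a*b) ** A"
  unfolding vec_eq_iff forall_3 by (simp only: cs, simp add: algebra_simps)
lemma mat_assoc2: "(A::complex^3^3) ** (mat b ** B) = mat b ** (A ** B)"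
  unfolding vec_eq_iff forall_3 by (simp only: cs, simp add: algebra_simps)
lemma mat_diff: "(mat a :: complex^3^3) - mat b = mat (a - b)"
  unfolding vec_eq_iff forall_3 by (simp only: cs, simp add: algebra_simps)
lemma mat_add: "(mat a :: complex^3^3) + mat b = mat (a + b)"
  unfolding vec_eq_iff forall_3 by (simp only: cs, simp add: algebra_simps)
lemma ct_matc: "conj_transpose ((mat c :: complex^3^3) ** A) = mat (cnj c) ** conj_transpose A"
  unfolding vec_eq_iff forall_3 by (simp only: cs, simp add: algebra_simps)

lemma cz: "cnj z * z = complex_of_real ((cmod z)^2)"
  by (metis complex_norm_square mult.commute)

lemma TR0:
  assumes "trc (conj_transpose X ** (X::complex^3^3)) = 0"
  shows "X = 0"
proof -
  have "complex_of_real ((cmod (X$1$1))^2 + (cmod (X$2$1))^2 + (cmod (X$3$1))^2 +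
     (cmod (X$1$2))^2 + (cmod (X$2$2))^2 + (cmod (X$3$2))^2 +
     (cmod (X$1$3))^2 + (cmod (X$2$3))^2 + (cmod (X$3$3))^2) = 0"
    using assms by (simp only: cs cz of_real_add add.assoc)
  hence s: "(cmod (X$1$1))^2 + (cmod (X$2$1))^2 + (cmod (X$3$1))^2 +
     (cmod (X$1$2))^2 + (cmod (X$2$2))^2 + (cmod (X$3$2))^2 +
     (cmod (X$1$3))^2 + (cmod (X$2$3))^2 + (cmod (X$3$3))^2 = 0"
    by (simp only: of_real_eq_0_iff)
  have "\<forall>i j. (cmod (X$i$j))^2 \<ge> 0" by simp
  hence "\<forall>i j. i \<in> {1,2,3::3} \<longrightarrow> j \<in> {1,2,3::3} \<longrightarrow> (cmod (X$i$j))^2 = 0"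
    using s by (smt (verit) empty_iff insert_iff)
  thus ?thesis unfolding vec_eq_iff forall_3 by simp
qed

lemma HX0: "conj_transpose X ** (X::complex^3^3) = 0 \<Longrightarrow> X = 0"
  by (rule TR0) (simp add: trc_def)

lemma NL:
  fixes X M :: "complex^3^3"
  assumes nrm: "X ** conj_transpose X = conj_transpose X ** X" and z: "X ** X ** M = 0"
  shows "X ** M = 0"
proof -
  define Y where "Y = X ** M"
  have XY: "X ** Y = 0" using z by (simp add: Y_def matrix_mul_assoc)
  define Z where "Z = conj_transpose X ** Y"
  have "conj_transpose Z ** Z = conj_transpose Y ** ((X ** conj_transpose X) ** Y)"
    by (simp add: Z_def ct_mult ct_ct matrix_mul_assoc)
  also have "\<dots> = conj_transpose Y ** (conj_transpose X ** (X ** Y))"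
    by (simp add: nrm matrix_mul_assoc)
  also have "\<dots> = 0" by (simp add: XY)
  finally have "Z = 0" by (rule HX0)
  have "conj_transpose Y ** Y = conj_transpose M ** Z"
    by (simp add: Y_def Z_def ct_mult matrix_mul_assoc)
  also have "\<dots> = 0" using \<open>Z = 0\<close> by simp
  finally have "Y = 0" by (rule HX0)
  thus ?thesis by (simp add: Y_def)
qed


lemma trc_diff: "trc ((A::complex^3^3) - B) = trc A - trc B"
  by (simp add: trc_def)
lemma trc_matc: "trc ((mat c :: complex^3^3) ** A) = c * trc A"
  by (simp only: cs, simp add: algebra_simps)
lemma trc_mat: "trc (mat c :: complex^3^3) = 3 * c"
  by (simp only: cs, simp add: algebra_simps)
lemma trc_outer: "trc (outer u) = cinner u u"
  by (simp only: cs, simp add: algebra_simps)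
lemma outer_outer: "outer u ** outer u = mat (cinner u u) ** outer u"
  unfolding vec_eq_iff forall_3 by (simp only: cs, simp add: algebra_simps)
lemma mm_outer: "(A::complex^3^3) ** outer u = (\<chi> i k. (A *v u)$i * cnj (u$k))"
  unfolding vec_eq_iff forall_3 by (simp only: cs, simp add: algebra_simps)
lemma mv_smult: "(A::complex^3^3) *v (c *s x) = c *s (A *v x)"
  unfolding vec_eq_iff forall_3 by (simp only: cs, simp add: algebra_simps)
lemma expand2: "((A::complex^3^3) - B) ** (C - D) = A ** C - A ** D - B ** C + B ** D"
  unfolding vec_eq_iff forall_3 by (simp only: cs, simp add: algebra_simps)
lemma NN1: "((A::complex^3^3) - mat x) ** conj_transpose (A - mat x) =
   A ** conj_transpose A - mat (cnj x) ** A - mat x ** conj_transpose A + mat (x * cnj x)"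
  unfolding vec_eq_iff forall_3 by (simp only: cs, simp add: algebra_simps)
lemma NN2: "conj_transpose ((A::complex^3^3) - mat x) ** (A - mat x) =
   conj_transpose A ** A - mat (cnj x) ** A - mat x ** conj_transpose A + mat (x * cnj x)"
  unfolding vec_eq_iff forall_3 by (simp only: cs, simp add: algebra_simps)

lemma NI:
  fixes P :: "complex^3^3"
  assumes nrm: "P ** conj_transpose P = conj_transpose P ** P" and idm: "P ** P = P"
  shows "conj_transpose P = P"
proof -
  let ?Q = "conj_transpose P"
  have hidm: "?Q ** ?Q = ?Q" using arg_cong[OF idm, of conj_transpose] by (simp add: ct_mult)
  have e1: "?Q ** P ** P = ?Q ** P" by (metis idm matrix_mul_assoc)
  have e2: "?Q ** ?Q ** P = ?Q ** P"
  proof -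
    have "?Q ** ?Q ** P = ?Q ** (?Q ** P)" by (simp add: matrix_mul_assoc)
    also have "\<dots> = ?Q ** (P ** ?Q)" by (simp only: nrm)
    also have "\<dots> = (?Q ** P) ** ?Q" by (simp only: matrix_mul_assoc)
    also have "\<dots> = (P ** ?Q) ** ?Q" by (simp only: nrm)
    also have "\<dots> = P ** (?Q ** ?Q)" by (simp only: matrix_mul_assoc)
    also have "\<dots> = P ** ?Q" by (simp only: hidm)
    finally show ?thesis by (simp only: nrm)
  qed
  have e3: "?Q ** P ** ?Q ** P = ?Q ** P"
  proof -
    have a: "?Q ** P ** ?Q = ?Q ** ?Q ** P" by (metis nrm matrix_mul_assoc)
    have "?Q ** P ** ?Q ** P = ?Q ** ?Q ** P ** P" using a by simp
    also have "\<dots> = (?Q ** ?Q) ** (P ** P)" by (simp add: matrix_mul_assoc)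
    also have "\<dots> = ?Q ** P" by (simp add: hidm idm)
    finally show ?thesis .
  qed
  define X where "X = P - ?Q ** P"
  have hX: "conj_transpose X = ?Q - ?Q ** P" by (simp add: X_def ct_diff ct_mult ct_ct)
  have "conj_transpose X ** X = ?Q ** P - ?Q ** (?Q ** P) - ?Q ** P ** P + ?Q ** P ** (?Q ** P)"
  proof -
    have "conj_transpose X ** X = (?Q - ?Q ** P) ** (P - ?Q ** P)" using hX by (simp add: X_def)
    thus ?thesis by (simp add: expand2 matrix_mul_assoc)
  qed
  also have "\<dots> = 0" by (simp add: matrix_mul_assoc e1 e2 e3)
  finally have "X = 0" by (rule HX0)
  hence "P = ?Q ** P" by (simp add: X_def)
  hence "?Q = conj_transpose (?Q ** P)" by simp
  also have "\<dots> = ?Q ** P" by (simp add: ct_mult ct_ct)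
  also have "\<dots> = P" using \<open>P = ?Q ** P\<close> by simp
  finally show ?thesis .
qed

lemma cinner_self_real: "cinner v v = complex_of_real ((cmod (v$1))^2 + (cmod (v$2))^2 + (cmod (v$3))^2)"
  by (simp only: cinner_def cz of_real_add)

lemma HI1:
  fixes P :: "complex^3^3"
  assumes hP: "conj_transpose P = P" and idm: "P ** P = P" and tP: "trc P = 1"
  shows "\<exists>u. cinner u u = 1 \<and> P = outer u"
proof -
  obtain j where j: "P$j$j \<noteq> 0"
    using tP unfolding trc_def by (metis add.right_neutral one_neq_zero)
  define v where "v = (\<chi> k. P$k$j)"
  have HPP: "conj_transpose P ** P = P" using hP idm by simp
  have cv: "cinner v v = P$j$j"
  proof -
    have "(conj_transpose P ** P)$j$j = cinner v v" by (simp only: cs v_def vec_lambda_beta)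
    thus ?thesis using HPP by simp
  qed
  define p where "p = (cmod (v$1))^2 + (cmod (v$2))^2 + (cmod (v$3))^2"
  have pc: "cinner v v = complex_of_real p" unfolding p_def by (rule cinner_self_real)
  have "p \<ge> 0" unfolding p_def by simp
  moreover have "p \<noteq> 0" using pc cv j by auto
  ultimately have pp: "p > 0" by simp
  define u where "u = complex_of_real (1 / sqrt p) *s v"
  have cu: "cinner u u = 1"
  proof -
    have "cinner u u = complex_of_real (1 / sqrt p) * complex_of_real (1 / sqrt p) * cinner v v"
      unfolding u_def by (simp only: cinner_def vector_smult_component, simp add: algebra_simps)
    also have "\<dots> = complex_of_real (1 / sqrt p * (1 / sqrt p) * p)" unfolding pc by (simp only: of_real_mult)
    also have "1 / sqrt p * (1 / sqrt p) * p = 1"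
    proof -
      have "sqrt p * sqrt p = p" using pp by simp
      moreover have "sqrt p > 0" using pp by simp
      ultimately show ?thesis by (simp add: field_simps)
    qed
    finally show ?thesis by simp
  qed
  have Pv: "P *v v = v"
  proof -
    have "\<forall>i. (P *v v)$i = (P ** P)$i$j" by (simp only: cs v_def vec_lambda_beta, simp)
    thus ?thesis using idm by (simp add: vec_eq_iff v_def)
  qed
  have Pu: "P *v u = u" unfolding u_def mv_smult Pv ..
  define R where "R = outer u"
  have PR: "P ** R = R" unfolding R_def mm_outer Pu by (simp add: outer_def)
  have RP: "R ** P = R"
  proof -
    have "conj_transpose (R ** P) = R" by (simp add: ct_mult hP R_def ct_outer PR[unfolded R_def])
    hence "conj_transpose (conj_transpose (R ** P)) = conj_transpose R" by simp
    thus ?thesis by (simp add: ct_ct R_def ct_outer)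
  qed
  have RR: "R ** R = R" unfolding R_def outer_outer cu by simp
  define M where "M = P - R"
  have hM: "conj_transpose M = M" by (simp add: M_def ct_diff hP R_def ct_outer)
  have iM: "M ** M = M" unfolding M_def expand2 idm PR RP RR by simp
  have "trc M = 0" unfolding M_def trc_diff tP R_def trc_outer cu by simp
  hence "trc (conj_transpose M ** M) = 0" by (simp add: hM iM)
  hence "M = 0" by (rule TR0)
  hence "P = outer u" by (simp add: M_def R_def)
  thus ?thesis using cu by blast
qed



lemma trc_sub_mat: "trc ((A::complex^3^3) - mat x) = trc A - 3 * x"
  by (simp only: cs, simp add: algebra_simps)
lemma split_lm: "(A::complex^3^3) - mat l = (A - mat m) + mat (m - l)"
  unfolding vec_eq_iff forall_3 by (simp only: cs, simp add: algebra_simps)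
lemma unit_axis: "cinner (axis 1 1) (axis 1 1) = 1"
  by (simp add: cinner_def axis_def)

lemma DECOMP:
  fixes A :: "complex^3^3"
  assumes U: "A ** conj_transpose A = mat 1" and D: "det A = 1"
    and C: "card (eigenvalues3 A) \<noteq> 3"
  shows "\<exists>a b u. a \<noteq> 0 \<and> cinner u u = 1 \<and> A = mat a + mat b ** outer u"
proof -
  have U': "conj_transpose A ** A = mat 1" using U matrix_left_right_inverse by blast
  obtain r0 r1 r2 where r: "\<And>c. det (A - mat c) = - ((c - r0)*(c - r1)*(c - r2))"
    "trc A = r0 + r1 + r2" "s2 A = r0*r1 + r0*r2 + r1*r2" "det A = r0*r1*r2"
    using char_roots[of A] by blast
  have ev: "eigenvalues3 A = {r0, r1, r2}"
  proof -
    have "c \<in> eigenvalues3 A \<longleftrightarrow> c \<in> {r0, r1, r2}" for c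
      unfolding eig_iff r(1) by auto
    thus ?thesis by blast
  qed
  have c3: "card {r0, r1, r2} \<noteq> 3" using C ev by simp
  have "r0 = r1 \<or> r0 = r2 \<or> r1 = r2"
  proof (rule ccontr)
    assume "\<not> (r0 = r1 \<or> r0 = r2 \<or> r1 = r2)"
    hence "card {r0, r1, r2} = 3" by simp
    with c3 show False by simp
  qed
  hence "\<exists>l m. trc A = l+l+m \<and> s2 A = l*l+l*m+l*m \<and> det A = l*l*m"
    apply (elim disjE)
    apply (rule exI[of _ r0], rule exI[of _ r2], simp add: r(2-4) algebra_simps)
    apply (rule exI[of _ r0], rule exI[of _ r1], simp add: r(2-4) algebra_simps)
    apply (rule exI[of _ r1], rule exI[of _ r0], simp add: r(2-4) algebra_simps)
    done
  then obtain l m where lm: "trc A = l+l+m" "s2 A = l*l+l*m+l*m" "det A = l*l*m" by blast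
  have l0: "l \<noteq> 0" using lm(3) D by auto
  have CHl: "(A - mat l) ** (A - mat l) ** (A - mat m) = 0"
    by (rule CH) (use lm in auto)
  define N where "N = A - mat l"
  have nrm: "N ** conj_transpose N = conj_transpose N ** N"
    unfolding N_def NN1 NN2 U U' ..
  have NM: "N ** (A - mat m) = 0" using NL[OF nrm] CHl by (simp add: N_def)
  show ?thesis
  proof (cases "l = m")
    case True
    have "N ** N = 0" using NM True by (simp add: N_def)
    hence "N ** N ** mat 1 = 0" by simp
    hence "N ** mat 1 = 0" by (rule NL[OF nrm])
    hence "A = mat l" by (simp add: N_def)
    hence "A = mat l + mat 0 ** outer (axis 1 1)" by simp
    thus ?thesis using l0 unit_axis by blast
  next
    case False
    define d where "d = m - l"
    have d0: "d \<noteq> 0" using False by (simp add: d_def)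
    have NN: "N ** N = mat d ** N"
    proof -
      have "N ** N = N ** ((A - mat m) + mat d)" unfolding d_def
        by (subst split_lm[of A l m, symmetric]) (simp add: N_def)
      also have "\<dots> = mat d ** N" by (simp add: mm_add_l NM mat_comm)
      finally show ?thesis .
    qed
    define P where "P = mat (1/d) ** N"
    have iP: "P ** P = P"
    proof -
      have "P ** P = mat (1/d) ** (N ** (mat (1/d) ** N))"
        by (simp only: P_def matrix_mul_assoc[symmetric])
      also have "\<dots> = mat (1/d) ** (mat (1/d) ** (N ** N))" by (simp only: mat_assoc2[of N])
      also have "\<dots> = mat (1/d * (1/d)) ** (N ** N)" by (simp only: mat_assoc)
      also have "\<dots> = mat (1/d * (1/d) * d) ** N" by (simp add: NN mat_assoc)
      also have "1/d * (1/d) * d = 1/d" using d0 by (simp add: field_simps)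
      finally show ?thesis by (simp add: P_def)
    qed
    have nP: "P ** conj_transpose P = conj_transpose P ** P"
    proof -
      have "P ** conj_transpose P = mat (1/d) ** (N ** (mat (cnj (1/d)) ** conj_transpose N))"
        by (simp only: P_def ct_matc matrix_mul_assoc[symmetric])
      also have "\<dots> = mat (1/d * cnj (1/d)) ** (N ** conj_transpose N)"
        by (simp only: mat_assoc2[of N] mat_assoc)
      finally have 1: "P ** conj_transpose P = mat (1/d * cnj (1/d)) ** (N ** conj_transpose N)" .
      have "conj_transpose P ** P = mat (cnj (1/d)) ** (conj_transpose N ** (mat (1/d) ** N))"
        by (simp only: P_def ct_matc matrix_mul_assoc[symmetric])
      also have "\<dots> = mat (cnj (1/d) * (1/d)) ** (conj_transpose N ** N)"
        by (simp only: mat_assoc2[of "conj_transpose N"] mat_assoc)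
      finally have 2: "conj_transpose P ** P = mat (cnj (1/d) * (1/d)) ** (conj_transpose N ** N)" .
      show ?thesis using 1 2 by (simp add: nrm mult.commute)
    qed
    have hP: "conj_transpose P = P" by (rule NI[OF nP iP])
    have tP: "trc P = 1"
      using d0 by (simp add: P_def trc_matc N_def trc_sub_mat lm(1) d_def field_simps)
    obtain u where u: "cinner u u = 1" "P = outer u" using HI1[OF hP iP tP] by blast
    have "A = mat l + N" by (simp add: N_def)
    also have "N = mat d ** P" using d0 by (simp add: P_def mat_assoc)
    finally have "A = mat l + mat d ** outer u" using u by simp
    thus ?thesis using l0 u by blast
  qed
qed



lemma AB_apply: "(mat a + mat b ** outer u) *v ((mat c + mat d ** outer v) *v x) =
   (a * c) *s x + (a * d *  cinner v x) *s v + (b * c *  cinner u x + b * d *  cinner u v * cinner v x) *s u"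
  unfolding vec_eq_iff forall_3 by (simp only: cs, simp add: algebra_simps)
lemma mv_dec: "(mat a + mat b ** outer u) *v x = a *s x + (b * cinner u x) *s u"
  unfolding vec_eq_iff forall_3 by (simp only: cs, simp add: algebra_simps)
lemma expandAB: "(mat a + mat b ** U) ** (mat c + mat d ** V) =
   mat (a * c) + mat (a*d) ** V + mat (b* c) ** (U::complex^3^3) + mat (b*d) ** (U ** V)"
  unfolding vec_eq_iff forall_3 by (simp only: cs, simp add: algebra_simps)
lemma outer_mult: "outer u ** outer v = mat (cinner u v) ** (\<chi> i j. u$i * cnj (v$j))"
  unfolding vec_eq_iff forall_3 by (simp only: cs vec_lambda_beta, simp add: algebra_simps)
lemma outer_smult: "outer (k *s u) = mat (k * cnj k) ** outer u"
  unfolding vec_eq_iff forall_3 by (simp only: cs, simp add: algebra_simps)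
lemma cinner_sym: "cinner y x = cnj (cinner x y)"
  by (simp add: cinner_def)
lemma cinner_lin: "cinner x (a *s u + b *s v) = a * cinner x u + b * cinner x v"
  by (simp add: cinner_def algebra_simps)
lemma cinner_smult: "cinner x (a *s u) = a * cinner x u"
  by (simp add: cinner_def algebra_simps)
lemma cinner_diff_self: "cinner (v - k *s u) (v - k *s u) =
   cinner v v - k * cinner v u - cnj k * cinner u v + k * cnj k * cinner u u"
  by (simp add: cinner_def algebra_simps)
lemma cinner_zero: "cinner x x = 0 \<Longrightarrow> x = 0"
proof -
  assume "cinner x x = 0"
  hence "(cmod (x$1))^2 + (cmod (x$2))^2 + (cmod (x$3))^2 = 0"
    unfolding cinner_self_real by (simp only: of_real_eq_0_iff)
  hence "(cmod (x$1))^2 = 0 \<and> (cmod (x$2))^2 = 0 \<and> (cmod (x$3))^2 = 0"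
    by (smt (verit) zero_le_power2)
  thus "x = 0" unfolding vec_eq_iff forall_3 by simp
qed
definition wcross :: "complex^3 \<Rightarrow> complex^3 \<Rightarrow> complex^3" where
  "wcross u v = vector [cnj (u$2 * v$3 - u$3 * v$2), cnj (u$3 * v$1 - u$1 * v$3), cnj (u$1 * v$2 - u$2 * v$1)]"

lemma wc: "wcross u v $ 1 = cnj (u$2 * v$3 - u$3 * v$2)" "wcross u v $ 2 = cnj (u$3 * v$1 - u$1 * v$3)"
   "wcross u v $ 3 = cnj (u$1 * v$2 - u$2 * v$1)"
  by (simp_all add: wcross_def)
lemma wcross_orth: "cinner u (wcross u v) = 0" "cinner v (wcross u v) = 0"
  by (simp_all only: cinner_def wc complex_cnj_mult complex_cnj_diff complex_cnj_cnj, simp_all add: algebra_simps)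
lemma wcross_norm: "cinner (wcross u v) (wcross u v) = cinner u u * cinner v v - cinner u v * cinner v u"
  by (simp only: cinner_def wc complex_cnj_mult complex_cnj_diff complex_cnj_cnj, simp add: algebra_simps)

lemma IND:
  assumes "cinner u u = 1" "cinner v v = 1" "cinner u v * cnj (cinner u v) \<noteq> 1"
    and "\<alpha> *s u + \<beta> *s v = 0"
  shows "\<alpha> = 0 \<and> \<beta> = 0"
proof -
  let ?k = "cinner u v"
  have c0: "cinner x 0 = 0" for x by (simp add: cinner_def)
  have "\<alpha> * cinner u u + \<beta> * cinner u v = 0" using cinner_lin[of u \<alpha> u \<beta> v] assms(4) c0 by simp
  hence 1: "\<alpha> + \<beta> * ?k = 0" using assms(1) by simp
  have "\<alpha> * cinner v u + \<beta> * cinner v v = 0" using cinner_lin[of v \<alpha> u \<beta> v] assms(4) c0 by simp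
  hence 2: "\<alpha> * cnj ?k + \<beta> = 0" using assms(2) cinner_sym[of v u] by simp
  have b: "\<beta> = - (\<alpha> * cnj ?k)" using 2 by (simp add: eq_neg_iff_add_eq_0 add.commute)
  have "\<alpha> * (1 - ?k * cnj ?k) = \<alpha> + \<beta> * ?k" unfolding b by (simp add: algebra_simps)
  hence "\<alpha> * (1 - ?k * cnj ?k) = 0" using 1 by simp
  hence "\<alpha> = 0" using assms(3) by simp
  thus ?thesis using b by simp
qed


lemma cinner00: "cinner 0 0 = 0" by (simp add: cinner_def)

lemma CONTRA:
  fixes u v z :: "complex^3"
  assumes uu: "cinner u u = 1" and vv: "cinner v v = 1"
   and k0: "cinner u v \<noteq> 0" and k1: "cinner u v * cnj (cinner u v) \<noteq> 1"
   and nz: "a \<noteq> 0" "b \<noteq> 0" "c \<noteq> 0" "d \<noteq> 0"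
   and EQ: "\<And>x. (a * c) *s x + (a * d * cinner v x) *s v + (b * c * cinner u x + b * d * cinner u v * cinner v x) *s u
              = e *s x + (f * cinner z x) *s z"
  shows False
proof -
  let ?k = "cinner u v"
  have vu: "cinner v u = cnj ?k" by (rule cinner_sym)
  define w where "w = wcross u v"
  have uw: "cinner u w = 0" and vw: "cinner v w = 0" using wcross_orth by (auto simp: w_def)
  have "cinner w w = 1 - ?k * cnj ?k" unfolding w_def wcross_norm uu vv vu by simp
  hence "cinner w w \<noteq> 0" using k1 by simp
  hence w0: "w \<noteq> 0" using cinner00 by auto
  have Ew: "(a * c) *s w = e *s w + (f * cinner z w) *s z" using EQ[of w] uw vw by simp
  have Eu: "(a * c) *s u + (a * d * cnj ?k) *s v + (b * c + b * d * ?k * cnj ?k) *s u = e *s u + (f * cinner z u) *s z"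
    using EQ[of u] uu vu by (simp add: mult.assoc)
  show False
  proof (cases "a * c = e")
    case False
    define g where "g = a * c - e"
    have g0: "g \<noteq> 0" using False by (simp add: g_def)
    have "g *s w - (f * cinner z w) *s z = (a * c) *s w - (e *s w + (f * cinner z w) *s z)"
      unfolding g_def vec_eq_iff by (simp add: algebra_simps)
    hence gw: "g *s w = (f * cinner z w) *s z" using Ew by simp
    have fz: "f * cinner z w \<noteq> 0"
    proof
      assume "f * cinner z w = 0"
      hence "g *s w = 0" using gw by simp
      thus False using g0 w0 by simp
    qed
    have "cinner u (g *s w) = 0" by (simp add: cinner_smult uw)
    hence "(f * cinner z w) * cinner u z = 0" unfolding gw cinner_smult .
    hence "cinner u z = 0" using fz by simp
    hence zu: "cinner z u = 0" using cinner_sym[of u z] by simp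
    have "(g + b * c + b * d * ?k * cnj ?k) *s u + (a * d * cnj ?k) *s v =
      ((a * c) *s u + (a * d * cnj ?k) *s v + (b * c + b * d * ?k * cnj ?k) *s u) - (e *s u + (f * cinner z u) *s z)"
      unfolding g_def zu vec_eq_iff by (simp add: algebra_simps)
    hence "(g + b * c + b * d * ?k * cnj ?k) *s u + (a * d * cnj ?k) *s v = 0" by (simp only: Eu diff_self)
    hence "a * d * cnj ?k = 0" using IND[OF uu vv k1] by blast
    thus False using nz k0 by simp
  next
    case True
    define s where "s = f * cinner z u"
    define t where "t = f * cinner z v"
    define p1 where "p1 = b * c + b * d * ?k * cnj ?k"
    define q1 where "q1 = a * d * cnj ?k"
    define p2 where "p2 = b * c * ?k + b * d * ?k"
    define q2 where "q2 = a * d"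
    have Ev: "(a * c) *s v + (a * d) *s v + (b * c * ?k + b * d * ?k) *s u = e *s v + (f * cinner z v) *s z"
      using EQ[of v] vv by simp
    have "p1 *s u + q1 *s v - s *s z =
      ((a * c) *s u + (a * d * cnj ?k) *s v + (b * c + b * d * ?k * cnj ?k) *s u) - (e *s u + (f * cinner z u) *s z)"
      unfolding p1_def q1_def s_def True[symmetric] vec_eq_iff by (simp add: algebra_simps)
    hence X1: "p1 *s u + q1 *s v = s *s z" using Eu by simp
    have "p2 *s u + q2 *s v - t *s z =
      ((a * c) *s v + (a * d) *s v + (b * c * ?k + b * d * ?k) *s u) - (e *s v + (f * cinner z v) *s z)"
      unfolding p2_def q2_def t_def True[symmetric] vec_eq_iff by (simp add: algebra_simps)
    hence X2: "p2 *s u + q2 *s v = t *s z" using Ev by simp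
    have "(t * p1 - s * p2) *s u + (t * q1 - s * q2) *s v = t *s (p1 *s u + q1 *s v) - s *s (p2 *s u + q2 *s v)"
      unfolding vec_eq_iff by (simp add: algebra_simps)
    also have "\<dots> = 0" unfolding X1 X2 vec_eq_iff by (simp add: algebra_simps)
    finally have "t * p1 - s * p2 = 0 \<and> t * q1 - s * q2 = 0" using IND[OF uu vv k1] by blast
    hence r1: "t * p1 = s * p2" and r2: "t * q1 = s * q2" by auto
    have "t * (p1 * q2 - p2 * q1) = 0"
    proof -
      have "t * (p1 * q2 - p2 * q1) = (t * p1) * q2 - p2 * (t * q1)" by (simp add: algebra_simps)
      also have "\<dots> = 0" unfolding r1 r2 by (simp add: algebra_simps)
      finally show ?thesis .
    qed
    moreover have "p1 * q2 - p2 * q1 = a * b * c * d * (1 - ?k * cnj ?k)"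
      unfolding p1_def p2_def q1_def q2_def by (simp add: algebra_simps)
    moreover have "a * b * c * d * (1 - ?k * cnj ?k) \<noteq> 0" using nz k1 by simp
    ultimately have "t = 0" by simp
    hence "s = 0" using r2 nz by (simp add: q2_def)
    hence "p1 *s u + q1 *s v = 0" using X1 by simp
    hence "q1 = 0" using IND[OF uu vv k1] by blast
    thus False using nz k0 by (simp add: q1_def)
  qed
qed

lemma COMM:
  fixes A B :: "complex^3^3"
  assumes A: "A = mat a + mat b ** outer u" and B: "B = mat c + mat d ** outer v"
    and AB: "A ** B = mat e + mat f ** outer z"
    and uu: "cinner u u = 1" and vv: "cinner v v = 1" and a0: "a \<noteq> 0" and c0: "c \<noteq> 0"
  shows "A ** B = B ** A"
proof (cases "b = 0 \<or> d = 0")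
  case True
  thus ?thesis
  proof
    assume "b = 0" hence "A = mat a" using A by simp
    thus ?thesis by (simp add: mat_comm)
  next
    assume "d = 0" hence "B = mat c" using B by simp
    thus ?thesis by (simp add: mat_comm)
  qed
next
  case False
  hence b0: "b \<noteq> 0" and d0: "d \<noteq> 0" by auto
  let ?k = "cinner u v"
  have vu: "cinner v u = cnj ?k" by (rule cinner_sym)
  have UV: "outer u ** outer v = outer v ** outer u"
  proof (cases "?k = 0")
    case True
    thus ?thesis unfolding outer_mult vu by simp
  next
    case k0: False
    show ?thesis
    proof (cases "?k * cnj ?k = 1")
      case True
      have "cinner (v - ?k *s u) (v - ?k *s u) = 0"
        unfolding cinner_diff_self uu vv vu using True by (simp add: mult.commute)
      hence "v - ?k *s u = 0" by (rule cinner_zero)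
      hence "v = ?k *s u" by simp
      hence "outer v = outer u" using True by (metis outer_smult matrix_mul_lid)
      thus ?thesis by simp
    next
      case k1: False
      have EQ: "(a * c) *s x + (a * d * cinner v x) *s v + (b * c * cinner u x + b * d * cinner u v * cinner v x) *s u
              = e *s x + (f * cinner z x) *s z" for x
      proof -
        have 1: "(A ** B) *v x = e *s x + (f * cinner z x) *s z" unfolding AB mv_dec ..
        have "(A ** B) *v x = A *v (B *v x)" by (simp add: matrix_vector_mul_assoc)
        also have "\<dots> = (a * c) *s x + (a * d * cinner v x) *s v + (b * c * cinner u x + b * d * cinner u v * cinner v x) *s u"
          unfolding A B by (rule AB_apply)
        finally show ?thesis using 1 by simp
      qed
      show ?thesis using CONTRA[OF uu vv k0 k1 a0 b0 c0 d0 EQ] by blast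
    qed
  qed
  have "A ** B = mat (a * c) + mat (a * d) ** outer v + mat (b * c) ** outer u + mat (b * d) ** (outer u ** outer v)"
    unfolding A B expandAB ..
  moreover have "B ** A = mat (c * a) + mat (c * b) ** outer u + mat (d * a) ** outer v + mat (d * b) ** (outer v ** outer u)"
    unfolding A B expandAB ..
  ultimately show ?thesis unfolding UV by (simp add: mult.commute add.commute add.left_commute)
qed



lemma loop_join_loop:
  assumes g: "loopin X x0 g" and h: "loopin X x0 h"
  shows "loopin X x0 (loop_join g h)"
proof -
  let ?T01 = "top_of_set {0..1::real}"
  have g1: "continuous_map ?T01 X g" "g 0 = x0" "g 1 = x0"
    using g unfolding loopin_def pathin_def by auto
  have g2: "continuous_map ?T01 X h" "h 0 = x0" "h 1 = x0"
    using h unfolding loopin_def pathin_def by auto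
  have eq: "loop_join g h = (\<lambda>x. if x \<le> 1/2 then (g \<circ> (\<lambda>t. 2 * t)) x else (h \<circ> (\<lambda>t. 2 * t -1)) x)"
    by (simp add: loop_join_def fun_eq_iff)
  have "continuous_map ?T01 X (\<lambda>x. if x \<le> 1/2 then (g \<circ> (\<lambda>t. 2 * t)) x else (h \<circ> (\<lambda>t. 2 * t -1)) x)"
  proof (intro continuous_map_cases_le continuous_map_compose, force, force)
    show "continuous_map (subtopology ?T01 {x \<in> topspace ?T01. x \<le> 1/2}) ?T01 ((*) 2)"
      by (auto simp: continuous_map_in_subtopology continuous_map_from_subtopology)
    have "continuous_map
           (subtopology (top_of_set {0..1}) {x. 0 \<le> x \<and> x \<le> 1 \<and> 1 \<le> x * 2})
           euclideanreal (\<lambda>t. 2 * t - 1)"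
      by (intro continuous_intros) (force intro: continuous_map_from_subtopology)
    then show "continuous_map (subtopology ?T01 {x \<in> topspace ?T01. 1/2 \<le> x}) ?T01 (\<lambda>t. 2 * t - 1)"
      by (force simp: continuous_map_in_subtopology)
    show "(g \<circ> (*) 2) x = (h \<circ> (\<lambda>t. 2 * t - 1)) x" if "x \<in> topspace ?T01" "x = 1/2" for x
    proof -
      have "2 * x = 1" using that by simp
      thus ?thesis by (simp add: g1 g2)
    qed
  qed (auto simp: g1 g2)
  hence "pathin X (loop_join g h)" unfolding eq pathin_def .
  moreover have "loop_join g h 0 = x0" "loop_join g h 1 = x0" by (simp_all add: loop_join_def g1 g2)
  ultimately show ?thesis by (simp add: loopin_def)
qed



lemma decmul_l: "(mat a + mat b ** U) ** (B::complex^3^3) = mat a ** B + mat b ** (U ** B)"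
  unfolding vec_eq_iff forall_3 by (simp only: cs, simp add: algebra_simps)
lemma decmul_r: "(B::complex^3^3) ** (mat a + mat b ** U) = mat a ** B + mat b ** (B ** U)"
  unfolding vec_eq_iff forall_3 by (simp only: cs, simp add: algebra_simps)
lemma outer_mv: "outer u *v x = cinner u x *s u"
  unfolding vec_eq_iff forall_3 by (simp only: cs, simp add: algebra_simps)
lemma mat_mv: "(mat a :: complex^3^3) *v x = a *s x"
  unfolding vec_eq_iff forall_3 by (simp only: cs, simp add: algebra_simps)

lemma inv_line:
  fixes B U :: "complex^3^3"
  assumes c: "(mat a + mat b ** outer u) ** B = B ** (mat a + mat b ** outer u)"
    and b0: "b \<noteq> 0" and uu: "cinner u u = 1"
  shows "\<exists>c. B *v u = c *s u"
proof -
  have "mat b ** (outer u ** B) = mat b ** (B ** outer u)"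
    using c unfolding decmul_l decmul_r by simp
  hence "mat (1/b) ** (mat b ** (outer u ** B)) = mat (1/b) ** (mat b ** (B ** outer u))" by simp
  hence UB: "outer u ** B = B ** outer u" using b0 by (simp add: mat_assoc)
  have "B *v u = B *v (outer u *v u)" by (simp add: outer_mv uu)
  also have "\<dots> = (outer u ** B) *v u" by (simp add: matrix_vector_mul_assoc UB)
  also have "\<dots> = cinner u (B *v u) *s u" by (simp add: matrix_vector_mul_assoc[symmetric] outer_mv)
  finally show ?thesis by blast
qed

lemma not_univ_line:
  fixes u0 :: "complex^3"
  shows "{x. \<exists>c. x = c *s u0} \<noteq> UNIV"
proof
  assume "{x. \<exists>c. x = c *s u0} = UNIV"
  then obtain c1 c2 where e1: "axis (1::3) (1::complex) = c1 *s u0" and e2: "axis (2::3) (1::complex) = c2 *s u0" by blast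
  have "c2 *s axis (1::3) (1::complex) = c1 *s axis (2::3) (1::complex)" unfolding e1 e2 by (simp add: vector_smult_assoc mult.commute)
  hence "(c2 *s axis (1::3) (1::complex)) $ 1 = (c1 *s axis (2::3) (1::complex)) $ (1::3)" by simp
  hence "c2 = 0" by (simp add: axis_def)
  hence "axis (2::3) (1::complex) = (0::complex^3)" using e2 by simp
  hence "(axis (2::3) (1::complex) :: complex^3) $ 2 = 0" by simp
  thus False by (simp add: axis_def)
qed

theorem proposition6p4:
  fixes X :: "'a topology" and x0 :: 'a and \<rho> :: "(real \<Rightarrow> 'a) \<Rightarrow> complex^3^3"
  assumes "closed_3_manifold X"
    and "closed_orientable 3 X"
    and "integral_homology_3_sphere X"
    and "x0 \<in> topspace X"
    and "pi1_rep_SU3 X x0 \<rho>"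
    and "irreducible_rep X x0 \<rho>"
  shows "\<exists>\<gamma>. loopin X x0 \<gamma> \<and> card (eigenvalues3 (\<rho> \<gamma>)) = 3"
proof (rule ccontr)
  assume nex: "\<not> (\<exists>\<gamma>. loopin X x0 \<gamma> \<and> card (eigenvalues3 (\<rho> \<gamma>)) = 3)"
  have rSU: "\<And>g. loopin X x0 g \<Longrightarrow> \<rho> g \<in> SU3"
    and rjoin: "\<And>g h. loopin X x0 g \<Longrightarrow> loopin X x0 h \<Longrightarrow> \<rho> (loop_join g h) = \<rho> g ** \<rho> h"
    using assms(5) unfolding pi1_rep_SU3_def by blast+
  have dec: "\<exists>a b u. a \<noteq> 0 \<and> cinner u u = 1 \<and> \<rho> g = mat a + mat b ** outer u" if "loopin X x0 g" for g
  proof (rule DECOMP)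
    show "\<rho> g ** conj_transpose (\<rho> g) = mat 1" "det (\<rho> g) = 1"
      using rSU[OF that] unfolding SU3_def by auto
    show "card (eigenvalues3 (\<rho> g)) \<noteq> 3" using nex that by blast
  qed
  have comm: "\<rho> g ** \<rho> h = \<rho> h ** \<rho> g" if g: "loopin X x0 g" and h: "loopin X x0 h" for g h
  proof -
    obtain a b u where A: "a \<noteq> 0" "cinner u u = 1" "\<rho> g = mat a + mat b ** outer u" using dec[OF g] by blast
    obtain c d v where B: "c \<noteq> 0" "cinner v v = 1" "\<rho> h = mat c + mat d ** outer v" using dec[OF h] by blast
    obtain e f z where C: "e \<noteq> 0" "cinner z z = 1" "\<rho> (loop_join g h) = mat e + mat f ** outer z"
      using dec[OF loop_join_loop[OF g h]] by blast
    have AB: "\<rho> g ** \<rho> h = mat e + mat f ** outer z" using C(3) rjoin[OF g h] by simp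
    show ?thesis by (rule COMM[OF A(3) B(3) AB A(2) B(2) A(1) B(1)])
  qed
  obtain u0 :: "complex^3" where u0: "u0 \<noteq> 0" and inv: "\<And>g. loopin X x0 g \<Longrightarrow> \<exists>c. \<rho> g *v u0 = c *s u0"
  proof (cases "\<exists>g0 a b u. loopin X x0 g0 \<and> b \<noteq> 0 \<and> cinner u u = 1 \<and> \<rho> g0 = mat a + mat b ** outer u")
    case True
    then obtain g0 a b u where g0: "loopin X x0 g0" "b \<noteq> 0" "cinner u u = 1" "\<rho> g0 = mat a + mat b ** outer u"
      by blast
    have "u \<noteq> 0" using g0(3) cinner00 by auto
    moreover have "\<exists>c. \<rho> g *v u = c *s u" if "loopin X x0 g" for g
    proof (rule inv_line)
      show "(mat a + mat b ** outer u) ** \<rho> g = \<rho> g ** (mat a + mat b ** outer u)"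
        using comm[OF g0(1) that] g0(4) by simp
    qed (use g0 in auto)
    ultimately show ?thesis using that by blast
  next
    case False
    have "\<exists>c. \<rho> g *v axis (1::3) (1::complex) = c *s axis (1::3) (1::complex)" if lg: "loopin X x0 g" for g
    proof -
      obtain a b u where A: "a \<noteq> 0" "cinner u u = 1" "\<rho> g = mat a + mat b ** outer u" using dec[OF lg] by blast
      have "b = 0" using False lg A by blast
      hence "\<rho> g = mat a" using A(3) by simp
      thus ?thesis by (simp add: mat_mv)
    qed
    moreover have "axis (1::3) (1::complex) \<noteq> (0::complex^3)" by (simp add: axis_eq_0_iff)
    ultimately show ?thesis using that by blast
  qed
  define W where "W = {x. \<exists>c. x = c *s u0}"
  have "complex_subspace W"
    unfolding complex_subspace_def W_def
  proof (intro conjI ballI allI)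
    show "0 \<in> {x. \<exists>c. x = c *s u0}" by (auto intro: exI[of _ 0])
  next
    fix v w assume "v \<in> {x. \<exists>c. x = c *s u0}" "w \<in> {x. \<exists>c. x = c *s u0}"
    then obtain c1 c2 where "v = c1 *s u0" "w = c2 *s u0" by blast
    thus "v + w \<in> {x. \<exists>c. x = c *s u0}" by (auto simp: vector_sadd_rdistrib intro: exI[of _ "c1 + c2"])
  next
    fix c v assume "v \<in> {x. \<exists>c. x = c *s u0}"
    then obtain c1 where "v = c1 *s u0" by blast
    thus "c *s v \<in> {x. \<exists>c. x = c *s u0}" by (auto simp: vector_smult_assoc)
  qed
  moreover have "W \<noteq> {0}"
  proof
    assume "W = {0}"
    moreover have "u0 \<in> W" unfolding W_def by (auto intro: exI[of _ 1])
    ultimately show False using u0 by simp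
  qed
  moreover have "W \<noteq> UNIV" unfolding W_def by (rule not_univ_line)
  moreover have "\<forall>g. loopin X x0 g \<longrightarrow> (\<forall>v\<in>W. \<rho> g *v v \<in> W)"
  proof (intro allI impI ballI)
    fix g v assume g: "loopin X x0 g" and "v \<in> W"
    then obtain c1 where v: "v = c1 *s u0" unfolding W_def by blast
    obtain c where "\<rho> g *v u0 = c *s u0" using inv[OF g] by blast
    hence "\<rho> g *v v = (c1 * c) *s u0" unfolding v mv_smult by (simp add: vector_smult_assoc)
    thus "\<rho> g *v v \<in> W" unfolding W_def by blast
  qed
  ultimately show False using assms(6) unfolding irreducible_rep_def by blast
qed

end
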